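(* Let $M$ be a set of goods, $v$ an additive valuation on $M$, $n$ a positive integer, $k<n$ a nonnegative integer, $S\subseteq M$ with $|S|=2k$, and $x\ge0$ such that $v(g)\le\mathrm{MMS}^n_v(M)/2+x$ for all $g\in S$. Then $\mathrm{MMS}^{n-k}_v(M\setminus S)\ge\mathrm{MMS}^n_v(M)-2x$.
   Context: $\mathrm{MMS}^d_v(T)$ is the maximum, over all partitions $(P_1,\dots,P_d)$ of $T$ into $d$ (possibly empty) bundles, of $\min_j v(P_j)$. *)

theory Defs
  imports Complex_Main
begin

text \<open>A partition of T into d (possibly empty) bundles is represented by an
assignment f mapping each good of T to a bundle index in {..<d}; bundle j is
{g \<in> T. f g = j}.\<close>

definition bundle_value :: "('a \<Rightarrow> real) \<Rightarrow> 'a set \<Rightarrow> ('a \<Rightarrow> nat) \<Rightarrow> nat \<Rightarrow> real" where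
  "bundle_value v T f j = sum v {g \<in> T. f g = j}"

definition MMS :: "('a \<Rightarrow> real) \<Rightarrow> nat \<Rightarrow> 'a set \<Rightarrow> real" where
  "MMS v d T = Max {Min ((bundle_value v T f) ` {..<d}) | f. f ` T \<subseteq> {..<d}}"

end

theory Submission
  imports Defs "HOL-Library.FuncSet"
begin

definition okp :: "('a \<Rightarrow> real) \<Rightarrow> 'a set \<Rightarrow> nat set \<Rightarrow> ('a \<Rightarrow> nat) \<Rightarrow> real \<Rightarrow> bool" where
  "okp v T I f t \<longleftrightarrow> finite I \<and> (\<forall>g\<in>T. f g \<in> I) \<and> (\<forall>i\<in>I. t \<le> sum v {g\<in>T. f g = i})"

lemma sum_mono_sub:
  assumes "finite B" "\<forall>g\<in>B. v g \<ge> (0::real)" "A \<subseteq> B"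
  shows "sum v A \<le> sum v B"
  using assms by (intro sum_mono2) auto

lemma MMS_set_finite:
  assumes "finite T"
  shows "finite {Min ((bundle_value v T f) ` {..<d}) | f. f ` T \<subseteq> {..<d}}"
proof -
  have "{Min ((bundle_value v T f) ` {..<d}) | f. f ` T \<subseteq> {..<d}}
     \<subseteq> (\<lambda>f. Min ((bundle_value v T f) ` {..<d})) ` (PiE T (\<lambda>_. {..<d}))"
  proof
    fix y assume "y \<in> {Min ((bundle_value v T f) ` {..<d}) | f. f ` T \<subseteq> {..<d}}"
    then obtain f where f: "f ` T \<subseteq> {..<d}" "y = Min ((bundle_value v T f) ` {..<d})" by blast
    have "bundle_value v T (restrict f T) = bundle_value v T f"
      by (intro ext) (auto simp: bundle_value_def restrict_apply intro!: sum.cong)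
    moreover have "restrict f T \<in> PiE T (\<lambda>_. {..<d})" using f(1) by auto
    ultimately show "y \<in> (\<lambda>f. Min ((bundle_value v T f) ` {..<d})) ` (PiE T (\<lambda>_. {..<d}))"
      using f(2) by (metis (no_types, lifting) image_eqI)
  qed
  moreover have "finite (PiE T (\<lambda>_. {..<d::nat}))" using assms by (intro finite_PiE) auto
  ultimately show ?thesis by (meson finite_imageI finite_subset)
qed

lemma MMS_ge:
  assumes "finite T" "f ` T \<subseteq> {..<d}" "d > 0" "\<forall>j<d. c \<le> bundle_value v T f j"
  shows "c \<le> MMS v d T"
proof -
  have "c \<le> Min ((bundle_value v T f) ` {..<d})"
    using assms(3,4) by (subst Min_ge_iff) auto
  also have "\<dots> \<le> MMS v d T" unfolding MMS_def
    using assms(2) by (intro Max_ge[OF MMS_set_finite[OF assms(1)]]) blast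
  finally show ?thesis .
qed

lemma MMS_attained:
  assumes "finite T" "d > 0"
  shows "\<exists>f. f ` T \<subseteq> {..<d} \<and> (\<forall>j<d. MMS v d T \<le> bundle_value v T f j)"
proof -
  have ne: "{Min ((bundle_value v T f) ` {..<d}) | f. f ` T \<subseteq> {..<d}} \<noteq> {}"
    using assms(2) by (auto intro!: exI[of _ "\<lambda>_. 0"])
  have "MMS v d T \<in> {Min ((bundle_value v T f) ` {..<d}) | f. f ` T \<subseteq> {..<d}}"
    unfolding MMS_def by (rule Max_in[OF MMS_set_finite[OF assms(1)] ne])
  then obtain f where f: "f ` T \<subseteq> {..<d}" "MMS v d T = Min ((bundle_value v T f) ` {..<d})" by blast
  show ?thesis
    using f by (intro exI[of _ f]) auto
qed

lemma main:
  assumes "finite T" "\<forall>g\<in>T. v g \<ge> 0" "okp v T I f t" "S \<subseteq> T" "card S \<le> 2*k" "k < card I"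
    "\<forall>g\<in>S. v g \<le> t/2 + x" "x \<ge> 0" "t \<ge> 0"
  shows "\<exists>J f'. J \<subseteq> I \<and> card I - k \<le> card J \<and> okp v (T - S) J f' (t - 2*x)"
  using assms
proof (induction k arbitrary: T I f S)
  case 0
  then have "S = {}" using finite_subset by (metis card_0_eq le_zero_eq mult_0_right)
  then show ?case using "0.prems"(3,8) unfolding okp_def by (intro exI[of _ I] exI[of _ f]) auto
next
  case (Suc k)
  note fT = Suc.prems(1) and vT = Suc.prems(2) and ok = Suc.prems(3) and ST = Suc.prems(4)
    and cS = Suc.prems(5) and kI = Suc.prems(6) and vS = Suc.prems(7)
  have fI: "finite I" and fI2: "\<forall>g\<in>T. f g \<in> I" and bI: "\<forall>i\<in>I. t \<le> sum v {g\<in>T. f g = i}"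
    using ok unfolding okp_def by auto
  have fS: "finite S" using fT ST finite_subset by blast
  show ?case
  proof (cases "card S \<le> 2*k")
    case True
    from Suc.IH[OF fT vT ok ST True _ vS Suc.prems(8,9)] kI
    obtain J f' where "J \<subseteq> I" "card I - k \<le> card J" "okp v (T - S) J f' (t - 2*x)" by auto
    then show ?thesis by (intro exI[of _ J] exI[of _ f']) auto
  next
    case cS2: False
    show ?thesis
    proof (cases "\<exists>i\<in>I. 2 \<le> card {g\<in>S. f g = i}")
      case True
      then obtain i where i: "i \<in> I" "2 \<le> card {g\<in>S. f g = i}" by blast
      define A where "A = {g\<in>T. f g = i}"
      define T' where "T' = T - A"
      define I' where "I' = I - {i}"
      define S' where "S' = S - A"
      have eqb: "{g\<in>T'. f g = j} = {g\<in>T. f g = j}" if "j \<in> I'" for j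
        using that unfolding T'_def I'_def A_def by auto
      have ok': "okp v T' I' f t" using fI fI2 bI eqb unfolding okp_def
        by (auto simp: T'_def I'_def A_def)
      have SA: "S \<inter> A = {g\<in>S. f g = i}" using ST unfolding A_def by auto
      have "card S' = card S - card (S \<inter> A)" unfolding S'_def
        using fS by (simp add: card_Diff_subset_Int)
      then have cS': "card S' \<le> 2*k" using SA i(2) cS by simp
      have cI': "card I' = card I - 1" unfolding I'_def using i(1) fI by simp
      have "k < card I'" using cI' kI by simp
      from Suc.IH[OF _ _ ok' _ cS' this] fT vT ST vS Suc.prems(8,9)
      obtain J f' where J: "J \<subseteq> I'" "card I' - k \<le> card J" "okp v (T' - S') J f' (t - 2*x)"
        unfolding T'_def S'_def by auto
      have "card J \<ge> 1" using J(2) cI' kI by simp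
      then obtain j0 where j0: "j0 \<in> J" by (metis card.empty ex_in_conv not_one_le_zero)
      define f'' where "f'' = (\<lambda>g. if g \<in> A then j0 else f' g)"
      have "okp v (T - S) J f'' (t - 2*x)"
        unfolding okp_def
      proof (intro conjI ballI)
        show "finite J" using J(3) okp_def by blast
      next
        fix g assume "g \<in> T - S"
        then show "f'' g \<in> J" using j0 J(3) unfolding f''_def okp_def T'_def S'_def by auto
      next
        fix j assume "j \<in> J"
        then have "t - 2*x \<le> sum v {g\<in>T' - S'. f' g = j}" using J(3) unfolding okp_def by auto
        also have "\<dots> \<le> sum v {g\<in>T - S. f'' g = j}"
          using fT vT unfolding f''_def T'_def S'_def by (intro sum_mono_sub) auto
        finally show "t - 2*x \<le> sum v {g\<in>T - S. f'' g = j}" .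
      qed
      moreover have "J \<subseteq> I" using J(1) I'_def by auto
      moreover have "card I - Suc k \<le> card J" using J(2) cI' by simp
      ultimately show ?thesis by blast
    next
      case False
      then have le1: "\<forall>i\<in>I. card {g\<in>S. f g = i} \<le> 1" by auto
      have half: "t/2 - x \<le> sum v ({g\<in>T. f g = j} - S)" if j: "j \<in> I" for j
      proof -
        have fin: "finite {g\<in>S. f g = j}" using fS by auto
        have "sum v {g\<in>S. f g = j} \<le> t/2 + x"
        proof (cases "{g\<in>S. f g = j} = {}")
          case True then show ?thesis using Suc.prems(8,9) by (simp only: sum.empty)
        next
          case False
          then obtain a where a: "a \<in> {g\<in>S. f g = j}" by blast
          have "{g\<in>S. f g = j} = {a}" using le1 j a card_le_Suc0_iff_eq[OF fin] by auto
          moreover have "v a \<le> t/2 + x" using vS a by auto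
          ultimately show ?thesis by simp
        qed
        moreover have "sum v {g\<in>T. f g = j} = sum v ({g\<in>T. f g = j} - S) + sum v {g\<in>S. f g = j}"
        proof -
          have "{g\<in>T. f g = j} = ({g\<in>T. f g = j} - S) \<union> {g\<in>S. f g = j}" using ST by auto
          moreover have "sum v (({g\<in>T. f g = j} - S) \<union> {g\<in>S. f g = j}) = sum v ({g\<in>T. f g = j} - S) + sum v {g\<in>S. f g = j}"
            using fT fin by (intro sum.union_disjoint) auto
          ultimately show ?thesis by simp
        qed
        ultimately show ?thesis using bI j by fastforce
      qed
      have "S \<noteq> {}" using cS2 by auto
      then obtain g1 where g1: "g1 \<in> S" by blast
      define i where "i = f g1"
      have iI: "i \<in> I" using g1 ST fI2 i_def by auto
      obtain i2 where i2: "i2 \<in> I" "i2 \<noteq> i" "card S \<ge> 2 \<Longrightarrow> (\<exists>g2\<in>S. g2 \<noteq> g1 \<and> f g2 = i2)"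
      proof (cases "card S \<ge> 2")
        case True
        then obtain g2 where g2: "g2 \<in> S" "g2 \<noteq> g1"
          by (metis card_le_Suc0_iff_eq[OF fS] not_less_eq_eq numeral_2_eq_2)
        have "f g2 \<noteq> i"
        proof
          assume "f g2 = i"
          then have "g1 \<in> {g\<in>S. f g = i}" "g2 \<in> {g\<in>S. f g = i}" using g1 g2 i_def by auto
          then show False using le1 iI g2(2) card_le_Suc0_iff_eq[of "{g\<in>S. f g = i}"] fS by auto
        qed
        then show ?thesis using that g2 ST fI2 by auto
      next
        case False
        have "card (I - {i}) \<ge> 1" using kI iI fI by simp
        then obtain i2 where "i2 \<in> I - {i}" by (metis card.empty ex_in_conv not_one_le_zero)
        then show ?thesis using that False by auto
      qed
      define A where "A = {g\<in>T. f g = i \<or> f g = i2}"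
      have Asplit: "A - S = ({g\<in>T. f g = i} - S) \<union> ({g\<in>T. f g = i2} - S)" unfolding A_def by auto
      have "sum v (A - S) = sum v ({g\<in>T. f g = i} - S) + sum v ({g\<in>T. f g = i2} - S)"
        unfolding Asplit using fT i2(2) by (intro sum.union_disjoint) auto
      then have vA: "t - 2*x \<le> sum v (A - S)" using half[OF iI] half[OF i2(1)] by simp
      show ?thesis
      proof (cases "card I = Suc k + 1")
        case True
        have "okp v (T - S) {i} (\<lambda>_. i) (t - 2*x)"
          unfolding okp_def
        proof (intro conjI ballI)
          fix j assume "j \<in> {i}"
          have "sum v (A - S) \<le> sum v {g\<in>T - S. i = j}"
            using fT vT \<open>j \<in> {i}\<close> unfolding A_def by (intro sum_mono_sub) auto
          then show "t - 2*x \<le> sum v {g\<in>T - S. i = j}" using vA by simp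
        qed auto
        moreover have "card I - Suc k \<le> card {i}" using True by simp
        ultimately show ?thesis using iI by blast
      next
        case False
        define T' where "T' = T - A"
        define I' where "I' = I - {i, i2}"
        define S' where "S' = S - A"
        have eqb: "{g\<in>T'. f g = j} = {g\<in>T. f g = j}" if "j \<in> I'" for j
          using that unfolding T'_def I'_def A_def by auto
        have ok': "okp v T' I' f t" using fI fI2 bI eqb unfolding okp_def
          by (auto simp: T'_def I'_def A_def)
        have cSA: "card S' = card S - card (S \<inter> A)" unfolding S'_def
          using fS by (simp add: card_Diff_subset_Int)
        have finSA: "finite (S \<inter> A)" using fS by auto
        have g1A: "g1 \<in> S \<inter> A" using g1 ST unfolding A_def i_def by auto
        have cS': "card S' \<le> 2*k"
        proof (cases "card S \<ge> 2")
          case True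
          then obtain g2 where g2: "g2 \<in> S" "g2 \<noteq> g1" "f g2 = i2" using i2(3) by blast
          have "g2 \<in> S \<inter> A" using g2 ST unfolding A_def by auto
          then have "{g1, g2} \<subseteq> S \<inter> A" using g1A by auto
          then have "card {g1, g2} \<le> card (S \<inter> A)" using card_mono[OF finSA] by blast
          then have "2 \<le> card (S \<inter> A)" using g2(2) by simp
          then show ?thesis using cSA cS by simp
        next
          case False
          have "1 \<le> card (S \<inter> A)" using g1A finSA
            by (metis One_nat_def Suc_leI card_gt_0_iff empty_iff)
          then show ?thesis using cSA False by simp
        qed
        have cI': "card I' = card I - 2" unfolding I'_def using iI i2 fI by simp
        have "k < card I'" using cI' kI False by simp
        from Suc.IH[OF _ _ ok' _ cS' this] fT vT ST vS Suc.prems(8,9)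
        obtain J f' where J: "J \<subseteq> I'" "card I' - k \<le> card J" "okp v (T' - S') J f' (t - 2*x)"
          unfolding T'_def S'_def by auto
        have fJ: "finite J" using J(3) okp_def by blast
        have iJ: "i \<notin> J" using J(1) I'_def by auto
        define f'' where "f'' = (\<lambda>g. if g \<in> A then i else f' g)"
        have "okp v (T - S) (insert i J) f'' (t - 2*x)"
          unfolding okp_def
        proof (intro conjI ballI)
          show "finite (insert i J)" using fJ by simp
        next
          fix g assume "g \<in> T - S"
          then show "f'' g \<in> insert i J" using J(3) unfolding f''_def okp_def T'_def S'_def by auto
        next
          fix j assume j: "j \<in> insert i J"
          show "t - 2*x \<le> sum v {g\<in>T - S. f'' g = j}"
          proof (cases "j = i")
            case True
            have "sum v (A - S) \<le> sum v {g\<in>T - S. f'' g = j}"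
              using fT vT True unfolding f''_def A_def by (intro sum_mono_sub) auto
            then show ?thesis using vA by simp
          next
            case False
            then have "j \<in> J" using j by auto
            then have "t - 2*x \<le> sum v {g\<in>T' - S'. f' g = j}" using J(3) unfolding okp_def by auto
            also have "\<dots> \<le> sum v {g\<in>T - S. f'' g = j}"
              using fT vT unfolding f''_def T'_def S'_def by (intro sum_mono_sub) auto
            finally show ?thesis .
          qed
        qed
        moreover have "insert i J \<subseteq> I" using J(1) I'_def iI by auto
        moreover have "card I - Suc k \<le> card (insert i J)" using J(2) cI' fJ iJ False kI by simp
        ultimately show ?thesis by blast
      qed
    qed
  qed
qed

theorem lemma32:
  fixes M S :: "'a set" and v :: "'a \<Rightarrow> real" and n k :: nat and x :: real
  assumes "finite M"
    and "\<forall>g\<in>M. v g \<ge> 0"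
    and "n > 0" and "k < n"
    and "S \<subseteq> M" and "card S = 2 * k"
    and "x \<ge> 0"
    and "\<forall>g\<in>S. v g \<le> MMS v n M / 2 + x"
  shows "MMS v (n - k) (M - S) \<ge> MMS v n M - 2 * x"
proof -
  define t where "t = MMS v n M"
  have t0: "0 \<le> t" unfolding t_def
    by (rule MMS_ge[OF assms(1) _ assms(3), of "\<lambda>_. 0"])
       (use assms(2,3) in \<open>auto simp: bundle_value_def intro!: sum_nonneg\<close>)
  obtain f0 where f0: "f0 ` M \<subseteq> {..<n}" "\<forall>j<n. t \<le> bundle_value v M f0 j"
    using MMS_attained[OF assms(1,3)] unfolding t_def by blast
  have ok0: "okp v M {..<n} f0 t" using f0 unfolding okp_def bundle_value_def by auto
  obtain J f' where J: "J \<subseteq> {..<n}" "card {..<n} - k \<le> card J" "okp v (M - S) J f' (t - 2*x)"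
    using main[OF assms(1,2) ok0 assms(5) _ _ _ assms(7) t0, of k] assms(4,6,8) unfolding t_def by auto
  have fJ: "finite J" using J(3) okp_def by blast
  obtain J0 where J0: "J0 \<subseteq> J" "card J0 = n - k" "finite J0"
    using obtain_subset_with_card_n[of "n-k" J] J(2) by auto
  obtain h where h: "bij_betw h J0 {0..<n-k}" using ex_bij_betw_finite_nat[OF J0(3)] J0(2) by auto
  obtain j0 where j0: "j0 \<in> J0" using J0(2) assms(4) by (metis card.empty ex_in_conv zero_less_diff less_irrefl)
  define f'' where "f'' = (\<lambda>g. if f' g \<in> J0 then h (f' g) else h j0)"
  have img: "f'' ` (M - S) \<subseteq> {..<n-k}"
    using h j0 unfolding f''_def bij_betw_def by auto
  have "\<forall>j<n-k. t - 2*x \<le> bundle_value v (M - S) f'' j"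
  proof (intro allI impI)
    fix j assume "j < n - k"
    then obtain a where a: "a \<in> J0" "h a = j" using h unfolding bij_betw_def by (metis atLeastLessThan_iff imageE zero_le)
    have "t - 2*x \<le> sum v {g\<in>M - S. f' g = a}" using J(3) J0(1) a(1) unfolding okp_def by auto
    also have "\<dots> \<le> bundle_value v (M - S) f'' j" unfolding bundle_value_def
      using assms(1,2) a unfolding f''_def
      by (intro sum_mono_sub) auto
    finally show "t - 2*x \<le> bundle_value v (M - S) f'' j" .
  qed
  then show ?thesis unfolding t_def[symmetric]
    using MMS_ge[OF _ img] assms(1,4) by auto
qed

end
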